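(* Let $b\mid M$ with $b<M$, and let $C$ be the array code over $\mathbb{F}_q$ whose columns are associated with the elements of a $b$-spread of $\mathbb{F}_q^M$, each exactly once. Then $C$ has symbol locality $r_{\mathrm s}=2$ and node locality satisfying $2\le r_{\mathrm n}\le b+1$. Moreover, there exists a $b$-spread of $\mathbb{F}_q^M$ for which the resulting code has $r_{\mathrm n}\le M/b$.
   Context: $q$ is a prime power. A $b$-spread of $\mathbb{F}_q^M$ is a set of $b$-dimensional subspaces of $\mathbb{F}_q^M$ that pairwise intersect only in $\{\overline{0}\}$ and whose union is $\mathbb{F}_q^M$. Given $b$-dimensional subspaces $V_1,\dots,V_n$ of $\mathbb{F}_q^M$, the array code whose columns are associated with them is obtained by placing a basis of $V_j$ as columns $(j-1)b+1,\dots,jb$ (the $j$th thick column) of an $M\times bn$ matrix $G$ and taking all $b\times n$ arrays whose column-by-column flattening lies in the row space of $G$. A set $S\subseteq[n]\setminus\{j\}$ is a recovery set for codeword column $j$ if each entry of column $j$ is a fixed $\mathbb{F}_q$-linear combination of the entries in columns indexed by $S$, valid for all codewords (equivalently $V_j\subseteq\sum_{k\in S}V_k$); it is a recovery set for symbol $(i,j)$ if $c_{i,j}$ alone is such a combination (equivalently the $i$th column of the $j$th thick column of $G$ lies in $\sum_{k\in S}V_k$). The node locality $r_{\mathrm n}$ (resp. symbol locality $r_{\mathrm s}$) is the smallest $r$ such that every codeword column (resp. symbol) has a recovery set of size at most $r$. *)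

theory Defs
  imports "HOL-Analysis.Analysis"
begin

text \<open>Ambient space: F_q^M is rendered as the type 'a^'m where 'a is a finite field
(so q = CARD('a) is a prime power) and M = CARD('m).\<close>

definition is_spread :: "nat \<Rightarrow> ('a::field ^ 'm) set set \<Rightarrow> bool" where
  "is_spread b S \<longleftrightarrow>
     (\<forall>V\<in>S. vec.subspace V \<and> vec.dim V = b) \<and>
     (\<forall>V\<in>S. \<forall>W\<in>S. V \<noteq> W \<longrightarrow> V \<inter> W = {0}) \<and>
     \<Union>S = UNIV"

text \<open>Generator matrix G, column by column: g j i is the i-th column (i < b) of the
j-th thick column (j < n).  A codeword is x G for a message x in F_q^M; its (i,j) entry
is the dot product of x with g j i.\<close>

definition code_entry :: "(nat \<Rightarrow> nat \<Rightarrow> 'a::field ^ 'm) \<Rightarrow> ('a ^ 'm) \<Rightarrow> nat \<Rightarrow> nat \<Rightarrow> 'a" where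
  "code_entry g x i j = (\<Sum>t\<in>UNIV. x $ t * g j i $ t)"

definition symbol_recoverable ::
  "nat \<Rightarrow> (nat \<Rightarrow> nat \<Rightarrow> 'a::field ^ 'm) \<Rightarrow> nat set \<Rightarrow> nat \<Rightarrow> nat \<Rightarrow> bool" where
  "symbol_recoverable b g R i j \<longleftrightarrow>
     (\<exists>c :: nat \<Rightarrow> nat \<Rightarrow> 'a. \<forall>x.
        code_entry g x i j = (\<Sum>k\<in>R. \<Sum>i'<b. c k i' * code_entry g x i' k))"

definition column_recoverable ::
  "nat \<Rightarrow> (nat \<Rightarrow> nat \<Rightarrow> 'a::field ^ 'm) \<Rightarrow> nat set \<Rightarrow> nat \<Rightarrow> bool" where
  "column_recoverable b g R j \<longleftrightarrow> (\<forall>i<b. symbol_recoverable b g R i j)"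

definition node_locality :: "nat \<Rightarrow> nat \<Rightarrow> (nat \<Rightarrow> nat \<Rightarrow> 'a::field ^ 'm) \<Rightarrow> nat" where
  "node_locality n b g =
     (LEAST r. \<forall>j<n. \<exists>R. R \<subseteq> {..<n} - {j} \<and> card R \<le> r \<and> column_recoverable b g R j)"

definition symbol_locality :: "nat \<Rightarrow> nat \<Rightarrow> (nat \<Rightarrow> nat \<Rightarrow> 'a::field ^ 'm) \<Rightarrow> nat" where
  "symbol_locality n b g =
     (LEAST r. \<forall>j<n. \<forall>i<b. \<exists>R. R \<subseteq> {..<n} - {j} \<and> card R \<le> r \<and> symbol_recoverable b g R i j)"

text \<open>g is a generator of the array code whose columns are associated with the
elements of S, each exactly once: V enumerates S bijectively by {..<n}, and
g j 0, ..., g j (b-1) is a basis of V j.\<close>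
definition array_code_of :: "nat \<Rightarrow> nat \<Rightarrow> ('a::field ^ 'm) set set \<Rightarrow>
    (nat \<Rightarrow> ('a ^ 'm) set) \<Rightarrow> (nat \<Rightarrow> nat \<Rightarrow> 'a ^ 'm) \<Rightarrow> bool" where
  "array_code_of n b S V g \<longleftrightarrow>
     bij_betw V {..<n} S \<and>
     (\<forall>j<n. inj_on (g j) {..<b} \<and> vec.independent (g j ` {..<b}) \<and>
            vec.span (g j ` {..<b}) = V j)"

end

theory Submission
  imports Defs "HOL-Algebra.Algebraic_Closure_Type"
begin


definition subfieldset :: "'l::field set \<Rightarrow> bool" where
  "subfieldset P \<longleftrightarrow> 0 \<in> P \<and> 1 \<in> P \<and> (\<forall>x\<in>P. \<forall>y\<in>P. x + y \<in> P \<and> x * y \<in> P)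
     \<and> (\<forall>x\<in>P. -x \<in> P) \<and> (\<forall>x\<in>P. x \<noteq> 0 \<longrightarrow> inverse x \<in> P)"

definition pspace :: "'l::field set \<Rightarrow> 'l set \<Rightarrow> bool" where
  "pspace P V \<longleftrightarrow> 0 \<in> V \<and> (\<forall>x\<in>V. \<forall>y\<in>V. x + y \<in> V) \<and> (\<forall>c\<in>P. \<forall>x\<in>V. c * x \<in> V)"

definition rep :: "(nat \<Rightarrow> 'l::field) \<Rightarrow> nat \<Rightarrow> (nat \<Rightarrow> 'l) \<Rightarrow> 'l" where
  "rep \<beta> d c = (\<Sum>i<d. c i * \<beta> i)"

abbreviation Pd :: "nat \<Rightarrow> 'l set \<Rightarrow> (nat \<Rightarrow> 'l) set" where
  "Pd d P \<equiv> PiE {..<d} (\<lambda>_. P)"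

lemma rep_in:
  assumes "pspace P V" "\<forall>i<d. \<beta> i \<in> V" "c \<in> Pd d P"
  shows "rep \<beta> d c \<in> V"
  using assms unfolding rep_def
proof (induction d arbitrary: c)
  case 0 then show ?case by (simp add: pspace_def)
next
  case (Suc d)
  have "(\<Sum>i<d. c i * \<beta> i) \<in> V"
  proof -
    have "(\<Sum>i<d. c i * \<beta> i) = (\<Sum>i<d. restrict c {..<d} i * \<beta> i)" by simp
    moreover have "restrict c {..<d} \<in> Pd d P" using Suc.prems(3) by (auto simp: PiE_def Pi_def)
    ultimately show ?thesis using Suc.IH[of "restrict c {..<d}"] Suc.prems by (simp del: restrict_apply)
  qed
  moreover have "c d * \<beta> d \<in> V" using Suc.prems by (auto simp: pspace_def PiE_def Pi_def)
  ultimately show ?case using Suc.prems(1) by (simp add: pspace_def)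
qed

lemma sf_diff: "subfieldset P \<Longrightarrow> x \<in> P \<Longrightarrow> y \<in> P \<Longrightarrow> x - y \<in> P"
  unfolding subfieldset_def by (metis diff_conv_add_uminus)

lemma rep_diff:
  assumes "subfieldset P" "c \<in> Pd d P" "c' \<in> Pd d P"
  shows "\<exists>e\<in>Pd d P. rep \<beta> d c - rep \<beta> d c' = rep \<beta> d e"
proof -
  define e where "e = (\<lambda>i\<in>{..<d}. c i - c' i)"
  have "e \<in> Pd d P" using assms sf_diff[OF assms(1)] by (auto simp: e_def PiE_def Pi_def)
  moreover have "rep \<beta> d c - rep \<beta> d c' = rep \<beta> d e"
    by (simp add: rep_def e_def algebra_simps flip: sum_subtractf)
  ultimately show ?thesis by blast
qed

lemma rep_scale:
  assumes "subfieldset P" "c \<in> Pd d P" "a \<in> P"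
  shows "\<exists>e\<in>Pd d P. a * rep \<beta> d c = rep \<beta> d e"
proof -
  define e where "e = (\<lambda>i\<in>{..<d}. a * c i)"
  have "e \<in> Pd d P" using assms by (auto simp: e_def subfieldset_def PiE_def Pi_def)
  moreover have "a * rep \<beta> d c = rep \<beta> d e"
    by (simp add: rep_def e_def sum_distrib_left algebra_simps)
  ultimately show ?thesis by blast
qed

lemma rep_Suc:
  "rep (\<beta>(d := v)) (Suc d) c = rep \<beta> d (restrict c {..<d}) + c d * v"
  by (simp add: rep_def)

lemma step_inj:
  assumes sf: "subfieldset P" and inj: "inj_on (rep \<beta> d) (Pd d P)"
    and v: "v \<notin> rep \<beta> d ` Pd d P"
  shows "inj_on (rep (\<beta>(d := v)) (Suc d)) (Pd (Suc d) P)"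
proof (rule inj_onI)
  fix c c' assume c: "c \<in> Pd (Suc d) P" and c': "c' \<in> Pd (Suc d) P"
    and eq: "rep (\<beta>(d := v)) (Suc d) c = rep (\<beta>(d := v)) (Suc d) c'"
  have rc: "restrict c {..<d} \<in> Pd d P" using c by (auto simp: PiE_def Pi_def)
  have rc': "restrict c' {..<d} \<in> Pd d P" using c' by (auto simp: PiE_def Pi_def)
  have cd: "c d \<in> P" "c' d \<in> P" using c c' by auto
  from eq have e1: "(c d - c' d) * v = rep \<beta> d (restrict c' {..<d}) - rep \<beta> d (restrict c {..<d})"
    by (simp add: rep_Suc algebra_simps)
  have cdeq: "c d = c' d"
  proof (rule ccontr)
    assume ne: "c d \<noteq> c' d"
    obtain e where e: "e \<in> Pd d P" "rep \<beta> d (restrict c' {..<d}) - rep \<beta> d (restrict c {..<d}) = rep \<beta> d e"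
      using rep_diff[OF sf rc' rc] by blast
    have dP: "c d - c' d \<in> P" using cd sf_diff[OF sf] by auto
    have "inverse (c d - c' d) \<in> P" using dP ne sf by (auto simp: subfieldset_def)
    then obtain e' where e': "e' \<in> Pd d P" "inverse (c d - c' d) * rep \<beta> d e = rep \<beta> d e'"
      using rep_scale[OF sf e(1)] by blast
    have "v = inverse (c d - c' d) * ((c d - c' d) * v)" using ne by simp
    also have "\<dots> = rep \<beta> d e'" using e1 e e' by simp
    finally show False using v e'(1) by blast
  qed
  with eq have "rep \<beta> d (restrict c {..<d}) = rep \<beta> d (restrict c' {..<d})"
    by (simp add: rep_Suc)
  with inj rc rc' have "restrict c {..<d} = restrict c' {..<d}" by (meson inj_onD)
  then have "\<forall>i<d. c i = c' i" by (metis lessThan_iff restrict_apply')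
  with cdeq c c' show "c = c'"
    by (intro extensionalityI[of _ "{..<Suc d}"]) (auto simp: less_Suc_eq PiE_def)
qed

lemma card_Pd: "finite P \<Longrightarrow> card (Pd d P) = card P ^ d"
  by (simp add: card_PiE)

lemma span_card_aux:
  assumes sf: "subfieldset P" and fP: "finite P" and ps: "pspace P V" and fV: "finite V"
  shows "\<forall>i<d. \<beta> i \<in> V \<Longrightarrow> inj_on (rep \<beta> d) (Pd d P) \<Longrightarrow>
     \<exists>d' \<beta>'. (\<forall>i<d'. \<beta>' i \<in> V) \<and> bij_betw (rep \<beta>' d') (Pd d' P) V"
proof (induction "card V - d" arbitrary: d \<beta> rule: less_induct)
  case less
  have sub: "rep \<beta> d ` Pd d P \<subseteq> V" using rep_in[OF ps] less.prems by blast
  show ?case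
  proof (cases "rep \<beta> d ` Pd d P = V")
    case True
    then show ?thesis using less.prems by (auto simp: bij_betw_def)
  next
    case False
    then obtain v where v: "v \<in> V" "v \<notin> rep \<beta> d ` Pd d P" using sub by blast
    have P2: "2 \<le> card P"
    proof -
      have "{0,1} \<subseteq> P" using sf by (auto simp: subfieldset_def)
      then have "card {0::'a,1} \<le> card P" using fP card_mono by blast
      then show ?thesis by simp
    qed
    have "card (rep \<beta> d ` Pd d P) = card P ^ d"
      using card_image[OF less.prems(2)] card_Pd[OF fP] by simp
    moreover have "card (rep \<beta> d ` Pd d P) < card V"
      using sub False fV by (simp add: psubset_card_mono)
    moreover have "d < 2 ^ d" by (rule less_exp)
    moreover have "(2::nat) ^ d \<le> card P ^ d" using P2 by (simp add: power_mono)
    ultimately have dlt: "d < card V" by linarith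
    have "\<forall>i<Suc d. (\<beta>(d := v)) i \<in> V" using less.prems(1) v by auto
    moreover have "inj_on (rep (\<beta>(d := v)) (Suc d)) (Pd (Suc d) P)"
      using step_inj[OF sf less.prems(2) v(2)] .
    moreover have "card V - Suc d < card V - d" using dlt by simp
    ultimately show ?thesis using less.hyps by blast
  qed
qed

lemma span_card:
  assumes sf: "subfieldset P" and fP: "finite P" and ps: "pspace P V" and fV: "finite V"
  shows "\<exists>d \<beta>. (\<forall>i<d. \<beta> i \<in> V) \<and> bij_betw (rep \<beta> d) (Pd d P) V"
proof -
  have "inj_on (rep \<beta> 0) (Pd 0 P)" for \<beta> by (simp add: inj_on_def)
  then show ?thesis using span_card_aux[OF assms, of 0] by auto
qed

lemma span_card':
  assumes sf: "subfieldset P" and fP: "finite P" and ps: "pspace P V" and fV: "finite V"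
  shows "\<exists>d \<beta>. (\<forall>i<d. \<beta> i \<in> V) \<and> bij_betw (rep \<beta> d) (Pd d P) V \<and> card V = card P ^ d"
proof -
  obtain d \<beta> where "(\<forall>i<d. \<beta> i \<in> V)" "bij_betw (rep \<beta> d) (Pd d P) V"
    using span_card[OF assms] by blast
  moreover then have "card V = card P ^ d" using bij_betw_same_card card_Pd[OF fP] by metis
  ultimately show ?thesis by blast
qed



lemma sqf_card:
  fixes p :: "'e::alg_closed_field poly"
  assumes "p \<noteq> 0" "\<forall>a. \<not> (poly p a = 0 \<and> poly (Polynomial.pderiv p) a = 0)"
  shows "card {x. poly p x = 0} = Polynomial.degree p"
  using assms
proof (induction "Polynomial.degree p" arbitrary: p rule: less_induct)
  case (less p)
  show ?case
  proof (cases "Polynomial.degree p = 0")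
    case True
    then obtain c where "p = [:c:]" by (meson degree_eq_zeroE)
    with less.prems have "c \<noteq> 0" by auto
    with \<open>p = [:c:]\<close> True show ?thesis by simp
  next
    case False
    then obtain x where x: "poly p x = 0"
      using alg_closed_imp_poly_has_root by blast
    hence "[:-x, 1:] dvd p"
      using poly_eq_0_iff_dvd by blast
    then obtain r where p_eq: "p = [:-x, 1:] * r"
      by (elim dvdE)
    have "r \<noteq> 0"
      using less.prems p_eq by auto
    have deg: "Polynomial.degree p = Suc (Polynomial.degree r)"
      unfolding p_eq using \<open>r \<noteq> 0\<close> by (subst degree_mult_eq) auto
    have pd: "Polynomial.pderiv p = r + [:-x, 1:] * Polynomial.pderiv r"
    proof -
      have "Polynomial.pderiv [:-x, 1:] = 1" by (simp add: pderiv_pCons)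
      then show ?thesis unfolding p_eq by (simp only: pderiv_mult) simp
    qed
    have rx: "poly r x \<noteq> 0"
    proof
      assume "poly r x = 0"
      then have "poly (Polynomial.pderiv p) x = 0" by (simp add: pd)
      with x less.prems(2) show False by blast
    qed
    have sq: "\<forall>a. \<not> (poly r a = 0 \<and> poly (Polynomial.pderiv r) a = 0)"
    proof (intro allI notI)
      fix a assume "poly r a = 0 \<and> poly (Polynomial.pderiv r) a = 0"
      then have "poly p a = 0" by (simp add: p_eq)
      moreover have "poly (Polynomial.pderiv p) a = 0" using \<open>poly r a = 0 \<and> poly (Polynomial.pderiv r) a = 0\<close>
        by (simp only: pd poly_add poly_mult) simp
      ultimately show False using less.prems(2) by blast
    qed
    have IH: "card {x. poly r x = 0} = Polynomial.degree r"
      using less.hyps[of r] deg \<open>r \<noteq> 0\<close> sq by simp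
    have roots: "{y. poly p y = 0} = insert x {y. poly r y = 0}"
      by (auto simp: p_eq)
    have "finite {y. poly r y = 0}" using poly_roots_finite[OF \<open>r \<noteq> 0\<close>] .
    then show ?thesis using roots rx IH deg by simp
  qed
qed



lemma fermat_fin:
  fixes a :: "'a::{finite,field}"
  shows "a ^ CARD('a) = a"
proof (cases "a = 0")
  case True then show ?thesis by simp
next
  case False
  define U where "U = (UNIV::'a set) - {0}"
  have fU: "finite U" by (simp add: U_def)
  have bij: "bij_betw (\<lambda>x. a * x) U U"
    unfolding bij_betw_def
  proof
    show "inj_on ((*) a) U" using False by (auto simp: inj_on_def)
    show "(*) a ` U = U"
    proof
      show "(*) a ` U \<subseteq> U" using False by (auto simp: U_def)
      show "U \<subseteq> (*) a ` U"
      proof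
        fix x assume "x \<in> U"
        then have "inverse a * x \<in> U" "x = a * (inverse a * x)" using False by (auto simp: U_def)
        then show "x \<in> (*) a ` U" by blast
      qed
    qed
  qed
  have "(\<Prod>x\<in>U. a * x) = (\<Prod>x\<in>U. x)"
    using prod.reindex_bij_betw[OF bij, of "\<lambda>x. x"] by simp
  moreover have "(\<Prod>x\<in>U. a * x) = a ^ card U * (\<Prod>x\<in>U. x)"
    by (simp add: prod.distrib)
  moreover have "(\<Prod>x\<in>U. x) \<noteq> 0" using fU by (simp add: U_def)
  ultimately have "a ^ card U = 1" by simp
  moreover have "card U = CARD('a) - 1" by (simp add: U_def card_Diff_singleton)
  moreover have "CARD('a) > 0" by simp
  ultimately show ?thesis
    by (metis One_nat_def Suc_pred mult.right_neutral power_Suc)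
qed

lemma fermat_fin_pow:
  fixes a :: "'a::{finite,field}"
  shows "a ^ (CARD('a) ^ k) = a"
proof (induction k)
  case 0 then show ?case by simp
next
  case (Suc k)
  have "a ^ (CARD('a) ^ Suc k) = (a ^ (CARD('a) ^ k)) ^ CARD('a)"
    by (simp only: power_Suc2 power_mult)
  also have "\<dots> = a ^ CARD('a)" by (simp only: Suc.IH)
  finally show ?case using fermat_fin[of a] by simp
qed



lemma chr_prime: "Factorial_Ring.prime CHAR('a::{finite,field})"
proof -
  have "CHAR('a) > 0" by (rule finite_imp_CHAR_pos) simp
  then show ?thesis by (rule prime_CHAR_semidom)
qed

lemma chr_E: "CHAR('a::field alg_closure) = CHAR('a)" by simp

lemma frob_nat: "(of_nat n :: 'a::{finite,field} alg_closure) ^ CHAR('a) = of_nat n"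
proof (induction n)
  case 0 then show ?case using chr_prime[where 'a='a] by (simp add: prime_gt_0_nat)
next
  case (Suc n)
  have "(of_nat (Suc n) :: 'a alg_closure) ^ CHAR('a) = (of_nat n + 1) ^ CHAR('a alg_closure)" by (simp add: add.commute)
  also have "\<dots> = of_nat n ^ CHAR('a alg_closure) + 1 ^ CHAR('a alg_closure)"
    by (rule freshmans_dream) (use chr_prime[where 'a='a] in simp_all)
  finally show ?case using Suc by simp
qed

definition P0 :: "'a::{finite,field} alg_closure set" where "P0 = range of_nat"

lemma P0_finite: "(P0::'a::{finite,field} alg_closure set) = of_nat ` {..<CHAR('a)}" "finite (P0::'a::{finite,field} alg_closure set)"
proof -
  have eq: "of_nat n = (of_nat (n mod CHAR('a)) :: 'a alg_closure)" for n
  proof -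
    have "(of_nat n :: 'a alg_closure) = of_nat (n div CHAR('a) * CHAR('a) + n mod CHAR('a))" by simp
    also have "\<dots> = of_nat (n div CHAR('a)) * of_nat CHAR('a) + of_nat (n mod CHAR('a))"
      by (simp only: of_nat_add of_nat_mult)
    also have "(of_nat CHAR('a) :: 'a alg_closure) = 0" using of_nat_CHAR[where 'a="'a alg_closure"] by simp
    finally show ?thesis by simp
  qed
  have lt: "n mod CHAR('a) < CHAR('a)" for n using chr_prime[where 'a='a] by (simp add: prime_gt_0_nat)
  show "(P0::'a alg_closure set) = of_nat ` {..<CHAR('a)}" unfolding P0_def
  proof (intro equalityI subsetI)
    fix y assume "y \<in> range (of_nat :: nat \<Rightarrow> 'a alg_closure)"
    then obtain n where "y = of_nat n" by auto
    then show "y \<in> of_nat ` {..<CHAR('a)}" using eq[of n] lt[of n] by blast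
  qed auto
  then show "finite (P0::'a alg_closure set)" by (metis finite_imageI finite_lessThan)
qed

lemma P0_card: "card (P0::'a::{finite,field} alg_closure set) = CHAR('a)"
proof -
  have "inj_on (of_nat :: nat \<Rightarrow> 'a alg_closure) {..<CHAR('a)}"
  proof (rule inj_onI)
    fix m n assume mn: "m \<in> {..<CHAR('a)}" "n \<in> {..<CHAR('a)}" "(of_nat m :: 'a alg_closure) = of_nat n"
    show "m = n"
    proof (rule ccontr)
      assume "m \<noteq> n"
      then consider "m < n" | "n < m" by linarith
      then show False
      proof cases
        case 1
        then have "(of_nat (n - m) :: 'a alg_closure) = 0" using mn(3) by (simp add: of_nat_diff)
        then have "CHAR('a) dvd (n - m)" using of_nat_eq_0_iff_char_dvd[where 'a="'a alg_closure"] by simp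
        then show False using 1 mn by (simp add: nat_dvd_not_less)
      next
        case 2
        then have "(of_nat (m - n) :: 'a alg_closure) = 0" using mn(3) by (simp add: of_nat_diff)
        then have "CHAR('a) dvd (m - n)" using of_nat_eq_0_iff_char_dvd[where 'a="'a alg_closure"] by simp
        then show False using 2 mn by (simp add: nat_dvd_not_less)
      qed
    qed
  qed
  then have "card (of_nat ` {..<CHAR('a)} :: 'a alg_closure set) = CHAR('a)" by (simp add: card_image)
  then show ?thesis by (simp only: P0_finite(1)[where 'a='a])
qed

lemma P0_subfield: "subfieldset (P0::'a::{finite,field} alg_closure set)"
proof -
  have p2: "CHAR('a) \<ge> 2" using chr_prime[where 'a='a] by (simp add: prime_ge_2_nat)
  have neg: "- (of_nat n :: 'a alg_closure) \<in> P0" for n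
  proof -
    have "(of_nat ((CHAR('a) - 1) * n) :: 'a alg_closure) + of_nat n = of_nat (CHAR('a) * n)"
    proof -
      have "(CHAR('a) - 1) * n + n = CHAR('a) * n" using p2
        by (metis Suc_diff_1 add.commute less_le_trans mult_Suc pos2)
      then show ?thesis by (metis of_nat_add)
    qed
    also have "\<dots> = 0" using of_nat_CHAR[where 'a="'a alg_closure"] by simp
    finally have "(of_nat n :: 'a alg_closure) + of_nat ((CHAR('a) - 1) * n) = 0"
      by (subst add.commute)
    then have "- (of_nat n :: 'a alg_closure) = of_nat ((CHAR('a) - 1) * n)"
      by (rule minus_unique)
    then show ?thesis unfolding P0_def by (rule ssubst) (rule rangeI)
  qed
  have inv: "inverse (of_nat n :: 'a alg_closure) \<in> P0" if nz: "(of_nat n :: 'a alg_closure) \<noteq> 0" for n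
  proof -
    let ?x = "(of_nat n :: 'a alg_closure)"
    define k where "k = CHAR('a) - 2"
    have ck: "CHAR('a) = Suc (Suc k)" using p2 by (simp add: k_def)
    have "?x * (?x * ?x ^ k) = ?x * 1"
      using frob_nat[where 'a='a, of n] unfolding ck by simp
    then have "?x * ?x ^ k = 1" using nz by (simp del: of_nat_power)
    then have "inverse ?x = ?x ^ k" by (rule inverse_unique)
    also have "\<dots> = of_nat (n ^ k)" by (simp only: of_nat_power)
    finally show ?thesis unfolding P0_def by (rule ssubst) (rule rangeI)
  qed
  have z: "(0::'a alg_closure) \<in> range of_nat" "(1::'a alg_closure) \<in> range of_nat"
    using rangeI[of "of_nat :: nat \<Rightarrow> 'a alg_closure" 0] rangeI[of "of_nat :: nat \<Rightarrow> 'a alg_closure" 1] by simp_all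
  show ?thesis unfolding subfieldset_def P0_def
    using neg inv z by (auto simp: P0_def simp flip: of_nat_add of_nat_mult)
qed

definition FF :: "'a::{finite,field} alg_closure set" where "FF = range to_ac"

lemma FF_finite: "finite (FF::'a::{finite,field} alg_closure set)" "card (FF::'a::{finite,field} alg_closure set) = CARD('a)"
  unfolding FF_def by (simp_all add: card_image inj_to_ac)

lemma FF_subfield: "subfieldset (FF::'a::{finite,field} alg_closure set)"
  unfolding subfieldset_def FF_def
  by (auto simp flip: to_ac_add to_ac_mult to_ac_minus to_ac_inverse to_ac_0 to_ac_1 intro: rangeI)

lemma FF_P0: "pspace (P0::'a::{finite,field} alg_closure set) FF"
  unfolding pspace_def P0_def FF_def
  by (auto simp flip: to_ac_add to_ac_mult to_ac_0 to_ac_of_nat intro: rangeI)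

lemma card_pow_chr: "\<exists>d0. CARD('a::{finite,field}) = CHAR('a) ^ d0"
proof -
  obtain d \<beta> where "card (FF::'a alg_closure set) = card (P0::'a alg_closure set) ^ d"
    using span_card'[OF P0_subfield P0_finite(2) FF_P0 FF_finite(1)] by blast
  then show ?thesis using FF_finite(2)[where 'a='a] P0_card[where 'a='a] by metis
qed



lemma card_ge2: "CARD('a::{finite,field}) \<ge> 2"
proof -
  have "card {0::'a, 1} \<le> CARD('a)" by (rule card_mono) auto
  then show ?thesis by simp
qed

lemma K_exists:
  assumes b: "b > 0"
  shows "\<exists>(K::'a::{finite,field} alg_closure set) \<beta>. subfieldset K \<and> FF \<subseteq> K \<and> (\<forall>i<b. \<beta> i \<in> K)
            \<and> bij_betw (rep \<beta> b) (Pd b FF) K"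
proof -
  obtain d0 where q: "CARD('a) = CHAR('a) ^ d0" using card_pow_chr[where 'a='a] by blast
  have q2: "CARD('a) \<ge> 2" by (rule card_ge2)
  have pr: "Factorial_Ring.prime CHAR('a alg_closure)" using chr_prime[where 'a='a] by simp
  have d0: "d0 > 0" using q q2 by (cases d0) auto
  define N where "N = CARD('a) ^ b"
  have N: "N = CHAR('a alg_closure) ^ (d0 * b)" unfolding N_def q by (simp add: power_mult)
  have "CARD('a) ^ 1 \<le> CARD('a) ^ b" by (rule power_increasing) (use b q2 in auto)
  then have N2: "N \<ge> 2" unfolding N_def using q2 by simp
  define K where "K = {x::'a alg_closure. x ^ N = x}"
  have addK: "(x + y) ^ N = x ^ N + y ^ N" for x y :: "'a alg_closure"
    by (rule freshmans_dream'[OF pr N])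
  have sfK: "subfieldset K"
    unfolding subfieldset_def
  proof (intro conjI ballI impI)
    show "0 \<in> K" using N2 by (simp add: K_def)
    show "1 \<in> K" by (simp add: K_def)
  next
    fix x y assume "x \<in> K" "y \<in> K"
    then show "x + y \<in> K" "x * y \<in> K" by (simp_all add: K_def addK power_mult_distrib)
  next
    fix x assume x: "x \<in> K"
    have "0 = (x + - x) ^ N" using N2 by simp
    also have "\<dots> = x + (- x) ^ N" using x by (simp only: addK) (simp add: K_def)
    finally show "- x \<in> K" unfolding K_def by (simp add: eq_neg_iff_add_eq_0 add.commute)
  next
    fix x assume "x \<in> K" "x \<noteq> 0"
    then show "inverse x \<in> K" by (simp add: K_def power_inverse)
  qed
  have FFK: "FF \<subseteq> K"
  proof
    fix y assume "y \<in> (FF :: 'a alg_closure set)"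
    then obtain a where "y = to_ac a" by (auto simp: FF_def)
    then show "y \<in> K" unfolding K_def N_def by (simp flip: to_ac_power add: fermat_fin_pow)
  qed
  have psK: "pspace FF K" unfolding pspace_def
  proof (intro conjI ballI)
    show "0 \<in> K" using sfK by (simp add: subfieldset_def)
  next
    fix x y assume "x \<in> K" "y \<in> K"
    then show "x + y \<in> K" using sfK by (simp add: subfieldset_def)
  next
    fix c x assume c: "c \<in> (FF::'a alg_closure set)" and x: "x \<in> K"
    have "c \<in> K" by (rule subsetD[OF FFK c])
    then show "c * x \<in> K" using x sfK by (simp add: subfieldset_def)
  qed
  define p where "p = (Polynomial.monom 1 N - [:0, 1:] :: 'a alg_closure poly)"
  have polyp: "poly p x = x ^ N - x" for x by (simp add: p_def poly_monom)
  have Kp: "K = {x. poly p x = 0}" unfolding K_def polyp by simp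
  have cpN: "Polynomial.coeff p N = 1" using N2 by (simp add: p_def coeff_pCons split: nat.split)
  have "p \<noteq> 0" using cpN by auto
  have degp: "Polynomial.degree p = N"
  proof (rule antisym)
    show "Polynomial.degree p \<le> N" unfolding p_def using N2
      by (intro degree_diff_le) (simp_all add: degree_monom_le)
    show "N \<le> Polynomial.degree p" using cpN by (intro le_degree) simp
  qed
  have ofN: "(of_nat N :: 'a alg_closure) = 0"
    unfolding N using d0 b of_nat_CHAR[where 'a="'a alg_closure"] by simp
  have pd: "Polynomial.pderiv p = [:- 1:]"
    unfolding p_def by (simp add: pderiv_diff pderiv_monom ofN pderiv_pCons)
  have sq: "\<forall>a. \<not> (poly p a = 0 \<and> poly (Polynomial.pderiv p) a = 0)" by (simp add: pd)
  have "card K = Polynomial.degree p" unfolding Kp by (rule sqf_card[OF \<open>p \<noteq> 0\<close> sq])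
  then have cKN: "card K = N" using degp by (rule trans)
  have fK: "finite K" unfolding Kp using \<open>p \<noteq> 0\<close> by (rule poly_roots_finite)
  obtain d \<beta> where d: "\<forall>i<d. \<beta> i \<in> K" "bij_betw (rep \<beta> d) (Pd d FF) K" "card K = card (FF::'a alg_closure set) ^ d"
    using span_card'[OF FF_subfield FF_finite(1) psK fK] by (elim exE conjE) (rule that; assumption)
  have "CARD('a) ^ d = CARD('a) ^ b" using d(3) cKN unfolding N_def FF_finite(2)[where 'a='a] by (rule subst)
  then have "d = b" using q2 by (simp add: power_inject_exp)
  then show ?thesis using sfK FFK d by blast
qed



definition sumspan :: "nat \<Rightarrow> (nat \<Rightarrow> nat \<Rightarrow> 'a::field ^ 'm) \<Rightarrow> nat set \<Rightarrow> ('a ^ 'm) set" where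
  "sumspan b g R = {x. \<exists>c. x = (\<Sum>k\<in>R. \<Sum>i'<b. c k i' *s g k i')}"

lemma code_entry_axis: "code_entry g (axis t 1) i j = g j i $ t"
proof -
  have "code_entry g (axis t 1) i j = (\<Sum>s\<in>UNIV. (if s = t then g j i $ s else 0))"
    unfolding code_entry_def by (intro sum.cong) (auto simp: axis_def)
  also have "\<dots> = g j i $ t" by simp
  finally show ?thesis .
qed

lemma recov_iff: "symbol_recoverable b g R i j \<longleftrightarrow> g j i \<in> sumspan b g R"
proof
  assume "symbol_recoverable b g R i j"
  then obtain c where c: "\<forall>x. code_entry g x i j = (\<Sum>k\<in>R. \<Sum>i'<b. c k i' * code_entry g x i' k)"
    unfolding symbol_recoverable_def by blast
  have "g j i = (\<Sum>k\<in>R. \<Sum>i'<b. c k i' *s g k i')"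
  proof (subst vec_eq_iff, intro allI)
    fix t
    have "g j i $ t = code_entry g (axis t 1) i j" by (simp add: code_entry_axis)
    also have "\<dots> = (\<Sum>k\<in>R. \<Sum>i'<b. c k i' * code_entry g (axis t 1) i' k)" using c by blast
    also have "\<dots> = (\<Sum>k\<in>R. \<Sum>i'<b. c k i' * g k i' $ t)" by (simp add: code_entry_axis)
    also have "\<dots> = (\<Sum>k\<in>R. \<Sum>i'<b. c k i' *s g k i') $ t" by simp
    finally show "g j i $ t = (\<Sum>k\<in>R. \<Sum>i'<b. c k i' *s g k i') $ t" .
  qed
  then show "g j i \<in> sumspan b g R" unfolding sumspan_def by blast
next
  assume "g j i \<in> sumspan b g R"
  then obtain c where c: "g j i = (\<Sum>k\<in>R. \<Sum>i'<b. c k i' *s g k i')"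
    unfolding sumspan_def by blast
  have "code_entry g x i j = (\<Sum>k\<in>R. \<Sum>i'<b. c k i' * code_entry g x i' k)" for x
  proof -
    have "code_entry g x i j = (\<Sum>t\<in>UNIV. x $ t * (\<Sum>k\<in>R. \<Sum>i'<b. c k i' * g k i' $ t))"
      unfolding code_entry_def by (subst c) simp
    also have "\<dots> = (\<Sum>t\<in>UNIV. \<Sum>k\<in>R. \<Sum>i'<b. c k i' * (x $ t * g k i' $ t))"
      by (simp add: sum_distrib_left algebra_simps)
    also have "\<dots> = (\<Sum>k\<in>R. \<Sum>t\<in>UNIV. \<Sum>i'<b. c k i' * (x $ t * g k i' $ t))"
      by (rule sum.swap)
    also have "\<dots> = (\<Sum>k\<in>R. \<Sum>i'<b. \<Sum>t\<in>UNIV. c k i' * (x $ t * g k i' $ t))"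
      by (intro sum.cong refl sum.swap)
    also have "\<dots> = (\<Sum>k\<in>R. \<Sum>i'<b. c k i' * code_entry g x i' k)"
      unfolding code_entry_def by (simp add: sum_distrib_left)
    finally show ?thesis .
  qed
  then show "symbol_recoverable b g R i j" unfolding symbol_recoverable_def by blast
qed

lemma sumspan_subspace: "vec.subspace (sumspan b g R)"
  unfolding vec.subspace_def
proof (intro conjI ballI allI)
  show "0 \<in> sumspan b g R" unfolding sumspan_def by (auto intro!: exI[of _ "\<lambda>_ _. 0"])
next
  fix x y assume "x \<in> sumspan b g R" "y \<in> sumspan b g R"
  then obtain c d where "x = (\<Sum>k\<in>R. \<Sum>i'<b. c k i' *s g k i')" "y = (\<Sum>k\<in>R. \<Sum>i'<b. d k i' *s g k i')"
    unfolding sumspan_def by blast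
  then have "x + y = (\<Sum>k\<in>R. \<Sum>i'<b. (c k i' + d k i') *s g k i')"
    by (simp add: sum.distrib vector_sadd_rdistrib)
  then show "x + y \<in> sumspan b g R" unfolding sumspan_def by (intro CollectI exI[of _ "\<lambda>k i'. c k i' + d k i'"])
next
  fix a x assume "x \<in> sumspan b g R"
  then obtain c where "x = (\<Sum>k\<in>R. \<Sum>i'<b. c k i' *s g k i')"
    unfolding sumspan_def by blast
  then have "a *s x = (\<Sum>k\<in>R. \<Sum>i'<b. (a * c k i') *s g k i')"
    by (simp add: vec.scale_sum_right)
  then show "a *s x \<in> sumspan b g R" unfolding sumspan_def by (intro CollectI exI[of _ "\<lambda>k i'. a * c k i'"])
qed

lemma g_in_sumspan: "k \<in> R \<Longrightarrow> finite R \<Longrightarrow> i < b \<Longrightarrow> g k i \<in> sumspan b g R"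
proof -
  assume k: "k \<in> R" "finite R" "i < b"
  define c where "c = (\<lambda>k' i'. if k' = k \<and> i' = i then (1::'a) else 0)"
  have "(\<Sum>k'\<in>R. \<Sum>i'<b. c k' i' *s g k' i') = (\<Sum>k'\<in>R. if k' = k then g k i else 0)"
  proof (intro sum.cong refl)
    fix k' assume "k' \<in> R"
    show "(\<Sum>i'<b. c k' i' *s g k' i') = (if k' = k then g k i else 0)"
    proof (cases "k' = k")
      case True
      then have "(\<Sum>i'<b. c k' i' *s g k' i') = (\<Sum>i'<b. if i' = i then g k i' else 0)"
        by (intro sum.cong) (auto simp: c_def)
      then show ?thesis using k True by simp
    next
      case False
      then show ?thesis by (simp add: c_def)
    qed
  qed
  also have "\<dots> = g k i" using k by simp
  finally show ?thesis unfolding sumspan_def by (auto intro!: exI[of _ c])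
qed

lemma sumspan_empty: "sumspan b g {} = {0}"
  unfolding sumspan_def by auto

lemma sumspan_single:
  assumes "vec.subspace W" "\<forall>i<b. g k i \<in> W"
  shows "sumspan b g {k} \<subseteq> W"
  unfolding sumspan_def using assms
  by (auto intro!: vec.subspace_sum vec.subspace_scale)



locale codeS =
  fixes b :: nat and S :: "('a::field ^ 'm) set set" and n :: nat and V :: "nat \<Rightarrow> ('a ^ 'm) set"
    and g :: "nat \<Rightarrow> nat \<Rightarrow> 'a ^ 'm"
  assumes spread: "is_spread b S" and code: "array_code_of n b S V g"
begin

lemma VS: "j < n \<Longrightarrow> V j \<in> S"
  using code unfolding array_code_of_def bij_betw_def by auto

lemma Vsurj: "W \<in> S \<Longrightarrow> \<exists>j<n. V j = W"
  using code unfolding array_code_of_def bij_betw_def by auto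

lemma Vinj: "j < n \<Longrightarrow> k < n \<Longrightarrow> j \<noteq> k \<Longrightarrow> V j \<noteq> V k"
  using code unfolding array_code_of_def bij_betw_def inj_on_def by auto

lemma Vsub: "j < n \<Longrightarrow> vec.subspace (V j)"
  using VS spread unfolding is_spread_def by auto

lemma Vdim: "j < n \<Longrightarrow> vec.dim (V j) = b"
  using VS spread unfolding is_spread_def by auto

lemma Vint: "j < n \<Longrightarrow> k < n \<Longrightarrow> j \<noteq> k \<Longrightarrow> V j \<inter> V k = {0}"
  using VS Vinj spread unfolding is_spread_def by metis

lemma cover: "\<exists>j<n. x \<in> V j"
proof -
  have "x \<in> \<Union>S" using spread unfolding is_spread_def by auto
  then obtain W where "W \<in> S" "x \<in> W" by auto
  then show ?thesis using Vsurj by blast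
qed

lemma Vspan: "j < n \<Longrightarrow> V j = vec.span (g j ` {..<b})"
  using code unfolding array_code_of_def by auto

lemma gin: "j < n \<Longrightarrow> i < b \<Longrightarrow> g j i \<in> V j"
  using Vspan by (simp add: vec.span_base)

lemma gnz: "j < n \<Longrightarrow> i < b \<Longrightarrow> g j i \<noteq> 0"
proof
  assume "j < n" "i < b" "g j i = 0"
  then have "0 \<in> g j ` {..<b}" by force
  then have "vec.dependent (g j ` {..<b})" by (rule vec.dependent_zero)
  with \<open>j < n\<close> code show False unfolding array_code_of_def by auto
qed

lemma Vss: "R \<subseteq> {..<n} \<Longrightarrow> k \<in> R \<Longrightarrow> V k \<subseteq> sumspan b g R"
proof -
  assume R: "R \<subseteq> {..<n}" "k \<in> R"
  then have fR: "finite R" using finite_subset by blast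
  have "g k ` {..<b} \<subseteq> sumspan b g R" using g_in_sumspan[OF R(2) fR] by auto
  then have "vec.span (g k ` {..<b}) \<subseteq> sumspan b g R"
    by (rule vec.span_minimal) (rule sumspan_subspace)
  then show ?thesis using Vspan R by auto
qed

lemma n_pos: "0 < n" using cover[of 0] by auto

lemma noP1:
  assumes "0 < b" "R \<subseteq> {..<n} - {0}" "card R \<le> 1"
  shows "g 0 0 \<notin> sumspan b g R"
proof
  assume gs: "g 0 0 \<in> sumspan b g R"
  have fR: "finite R" using assms(2) finite_subset by blast
  have g0: "g 0 0 \<noteq> 0" "g 0 0 \<in> V 0" using gnz gin n_pos assms(1) by auto
  show False
  proof (cases "card R = 0")
    case True
    then have "R = {}" using fR by simp
    then show False using gs g0 sumspan_empty by auto
  next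
    case False
    then have "card R = 1" using assms(3) by simp
    then obtain k where k: "R = {k}" using card_1_singletonE by blast
    then have kn: "k < n" "k \<noteq> 0" using assms(2) by auto
    have "sumspan b g {k} \<subseteq> V k"
      by (rule sumspan_single) (use Vsub kn gin in auto)
    then have "g 0 0 \<in> V k" using gs k by auto
    then have "g 0 0 \<in> V 0 \<inter> V k" using g0 by auto
    then show False using Vint[of 0 k] kn n_pos g0 by auto
  qed
qed

lemma exists_out:
  assumes "b < CARD('m)" "j < n"
  shows "\<exists>w. w \<notin> V j"
proof (rule ccontr)
  assume "\<not> ?thesis"
  then have "V j = UNIV" by auto
  then have "vec.dim (V j) = CARD('m)" using vec_dim_card[where 'a='a and 'n='m] by (simp only:)
  then show False using Vdim assms by simp
qed

lemma two_cover:
  assumes "b < CARD('m)" "j < n"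
  shows "\<exists>k<n. k \<noteq> j \<and> (\<exists>w\<in>V k. \<forall>v\<in>V j. \<exists>l<n. l \<noteq> j \<and> v - w \<in> V l)"
proof -
  obtain w where w: "w \<notin> V j" using exists_out assms by blast
  obtain k where k: "k < n" "w \<in> V k" using cover by blast
  have "k \<noteq> j" using w k by auto
  moreover have "\<exists>l<n. l \<noteq> j \<and> v - w \<in> V l" if v: "v \<in> V j" for v
  proof -
    obtain l where l: "l < n" "v - w \<in> V l" using cover by blast
    have "l \<noteq> j"
    proof
      assume "l = j"
      then have "w \<in> V j" using vec.subspace_diff[OF Vsub[OF assms(2)] v, of "v - w"] l by simp
      then show False using w by simp
    qed
    then show ?thesis using l by blast
  qed
  ultimately show ?thesis using k by blast
qed

lemma add_in_sumspan:
  assumes "R \<subseteq> {..<n}" "k \<in> R" "l \<in> R" "x \<in> V k" "y \<in> V l"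
  shows "x + y \<in> sumspan b g R"
  using Vss[OF assms(1,2)] Vss[OF assms(1,3)] assms(4,5)
  by (meson subsetD sumspan_subspace vec.subspace_add)

lemma symP2:
  assumes "b < CARD('m)" "j < n" "i < b"
  shows "\<exists>R. R \<subseteq> {..<n} - {j} \<and> card R \<le> 2 \<and> symbol_recoverable b g R i j"
proof -
  obtain k w where k: "k < n" "k \<noteq> j" "w \<in> V k"
    and H: "\<forall>v\<in>V j. \<exists>l<n. l \<noteq> j \<and> v - w \<in> V l"
    using two_cover[OF assms(1,2)] by blast
  obtain l where l: "l < n" "l \<noteq> j" "g j i - w \<in> V l" using H gin assms by blast
  let ?R = "{k, l}"
  have "g j i = w + (g j i - w)" by simp
  also have "\<dots> \<in> sumspan b g ?R" using k l by (intro add_in_sumspan) auto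
  finally have "symbol_recoverable b g ?R i j" by (simp add: recov_iff)
  moreover have "card ?R \<le> 2" by (simp add: card_insert_le_m1)
  moreover have "?R \<subseteq> {..<n} - {j}" using k l by auto
  ultimately show ?thesis by blast
qed

lemma nodePb:
  assumes "b < CARD('m)" "j < n"
  shows "\<exists>R. R \<subseteq> {..<n} - {j} \<and> card R \<le> b + 1 \<and> column_recoverable b g R j"
proof -
  obtain k w where k: "k < n" "k \<noteq> j" "w \<in> V k"
    and H: "\<forall>v\<in>V j. \<exists>l<n. l \<noteq> j \<and> v - w \<in> V l"
    using two_cover[OF assms(1,2)] by blast
  have "\<forall>i\<in>{..<b}. \<exists>l. l < n \<and> l \<noteq> j \<and> g j i - w \<in> V l" using H gin assms by blast
  then obtain lf where lf: "\<forall>i\<in>{..<b}. lf i < n \<and> lf i \<noteq> j \<and> g j i - w \<in> V (lf i)"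
    by metis
  let ?R = "insert k (lf ` {..<b})"
  have Rsub: "?R \<subseteq> {..<n} - {j}" using k lf by auto
  have "card ?R \<le> Suc (card (lf ` {..<b}))" by (simp add: card_insert_le_m1)
  also have "card (lf ` {..<b}) \<le> b" using card_image_le[of "{..<b}" lf] by simp
  finally have cR: "card ?R \<le> b + 1" by simp
  have "column_recoverable b g ?R j"
    unfolding column_recoverable_def
  proof (intro allI impI)
    fix i assume i: "i < b"
    have "g j i = w + (g j i - w)" by simp
    also have "\<dots> \<in> sumspan b g ?R" using k lf i Rsub by (intro add_in_sumspan[of ?R k "lf i"]) auto
    finally show "symbol_recoverable b g ?R i j" by (simp add: recov_iff)
  qed
  then show ?thesis using Rsub cR by blast
qed

end

lemma partA:
  fixes S :: "('a::field ^ 'm) set set"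
  assumes b: "0 < b" "b < CARD('m)" and sp: "is_spread b S" and cd: "array_code_of n b S V g"
  shows "symbol_locality n b g = 2 \<and> 2 \<le> node_locality n b g \<and> node_locality n b g \<le> b + 1"
proof -
  interpret codeS b S n V g using sp cd by unfold_locales
  let ?Ps = "\<lambda>r. \<forall>j<n. \<forall>i<b. \<exists>R. R \<subseteq> {..<n} - {j} \<and> card R \<le> r \<and> symbol_recoverable b g R i j"
  let ?Pn = "\<lambda>r. \<forall>j<n. \<exists>R. R \<subseteq> {..<n} - {j} \<and> card R \<le> r \<and> column_recoverable b g R j"
  have nPs: "\<not> ?Ps r" if "r \<le> 1" for r
  proof
    assume "?Ps r"
    then obtain R where "R \<subseteq> {..<n} - {0}" "card R \<le> r" "symbol_recoverable b g R 0 0"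
      using n_pos b by blast
    then show False using noP1[OF b(1), of R] that by (simp add: recov_iff)
  qed
  have nPn: "\<not> ?Pn r" if "r \<le> 1" for r
  proof
    assume "?Pn r"
    then obtain R where "R \<subseteq> {..<n} - {0}" "card R \<le> r" "column_recoverable b g R 0"
      using n_pos by blast
    then show False using noP1[OF b(1), of R] that b by (simp add: recov_iff column_recoverable_def)
  qed
  have Ps2: "?Ps 2" using symP2 b by blast
  have Pnb: "?Pn (b + 1)" using nodePb b by blast
  have "symbol_locality n b g = 2"
    unfolding symbol_locality_def
  proof (rule Least_equality)
    show "?Ps 2" by (rule Ps2)
    fix y assume "?Ps y"
    show "2 \<le> y"
    proof (rule ccontr)
      assume "\<not> 2 \<le> y"
      then have "y \<le> 1" by simp
      then show False using nPs \<open>?Ps y\<close> by blast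
    qed
  qed
  moreover have "node_locality n b g \<le> b + 1"
    unfolding node_locality_def using Pnb by (rule Least_le)
  moreover have "2 \<le> node_locality n b g"
  proof -
    have "?Pn (node_locality n b g)"
      unfolding node_locality_def using Pnb by (rule LeastI)
    show ?thesis
    proof (rule ccontr)
      assume "\<not> 2 \<le> node_locality n b g"
      then have "node_locality n b g \<le> 1" by simp
      then show False using nPn \<open>?Pn (node_locality n b g)\<close> by blast
    qed
  qed
  ultimately show ?thesis by simp
qed



locale ext =
  fixes h :: "'a::field \<Rightarrow> 'e::field" and K :: "'e set" and \<beta> :: "nat \<Rightarrow> 'e" and b :: nat
  assumes h_add: "\<And>x y. h (x + y) = h x + h y" and h_mult: "\<And>x y. h (x * y) = h x * h y"
    and h0: "h 0 = 0" and h_inj: "inj h"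
    and sfK: "subfieldset K" and hK: "\<And>x. h x \<in> K" and \<beta>K: "\<And>i. i < b \<Longrightarrow> \<beta> i \<in> K"
    and bijK: "bij_betw (rep \<beta> b) (Pd b (range h)) K"
begin

lemma K0: "0 \<in> K" and K1: "1 \<in> K" and Kadd: "x \<in> K \<Longrightarrow> y \<in> K \<Longrightarrow> x + y \<in> K"
  and Kmult: "x \<in> K \<Longrightarrow> y \<in> K \<Longrightarrow> x * y \<in> K" and Kneg: "x \<in> K \<Longrightarrow> - x \<in> K"
  and Kinv: "x \<in> K \<Longrightarrow> inverse x \<in> K"
proof -
  have A: "0 \<in> K" "1 \<in> K" "\<forall>x\<in>K. \<forall>y\<in>K. x + y \<in> K \<and> x * y \<in> K" "\<forall>x\<in>K. - x \<in> K"
    "\<forall>x\<in>K. x \<noteq> 0 \<longrightarrow> inverse x \<in> K"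
    using sfK unfolding subfieldset_def by auto
  show "0 \<in> K" "1 \<in> K" using A by auto
  show "x \<in> K \<Longrightarrow> y \<in> K \<Longrightarrow> x + y \<in> K" "x \<in> K \<Longrightarrow> y \<in> K \<Longrightarrow> x * y \<in> K"
    "x \<in> K \<Longrightarrow> - x \<in> K" using A by auto
  show "x \<in> K \<Longrightarrow> inverse x \<in> K" using A by (cases "x = 0") auto
qed

lemma Kdiff: "x \<in> K \<Longrightarrow> y \<in> K \<Longrightarrow> x - y \<in> K"
  by (metis Kadd Kneg diff_conv_add_uminus)

lemma h1: "h 1 = 1"
proof -
  have "h 1 * h 1 = h 1" using h_mult[of 1 1] by simp
  moreover have "h 1 \<noteq> 0" using h_inj h0 by (metis injD one_neq_zero)
  ultimately show ?thesis by simp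
qed

definition rp :: "(nat \<Rightarrow> 'a) \<Rightarrow> 'e" where "rp a = (\<Sum>i<b. h (a i) * \<beta> i)"

lemma rp_rep: "rp a = rep \<beta> b (restrict (\<lambda>i. h (a i)) {..<b})"
  unfolding rp_def rep_def by simp

lemma rp_Pd: "restrict (\<lambda>i. h (a i)) {..<b} \<in> Pd b (range h)"
  by auto

lemma rp_K: "rp a \<in> K"
  using bijK rp_Pd rp_rep unfolding bij_betw_def by auto

lemma rp_surj: "y \<in> K \<Longrightarrow> \<exists>a. y = rp a"
proof -
  assume "y \<in> K"
  then obtain c where c: "c \<in> Pd b (range h)" "y = rep \<beta> b c"
    using bijK unfolding bij_betw_def by auto
  define a where "a = (\<lambda>i. inv_into UNIV h (c i))"
  have "rp a = rep \<beta> b c"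
    unfolding rp_def rep_def a_def
  proof (intro sum.cong refl)
    fix i assume "i \<in> {..<b}"
    then have "c i \<in> range h" using c by auto
    then show "h (inv_into UNIV h (c i)) * \<beta> i = c i * \<beta> i" by (simp add: f_inv_into_f)
  qed
  then show ?thesis using c by metis
qed

lemma rp_inj: "rp a = rp a' \<Longrightarrow> i < b \<Longrightarrow> a i = a' i"
proof -
  assume eq: "rp a = rp a'" and i: "i < b"
  have "inj_on (rep \<beta> b) (Pd b (range h))" using bijK unfolding bij_betw_def by auto
  then have "restrict (\<lambda>i. h (a i)) {..<b} = restrict (\<lambda>i. h (a' i)) {..<b}"
    using eq rp_Pd rp_rep by (metis inj_onD)
  then have "h (a i) = h (a' i)" using i by (metis lessThan_iff restrict_apply')
  then show "a i = a' i" using h_inj by (simp add: inj_eq)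
qed

lemma rp_cong: "(\<And>i. i < b \<Longrightarrow> a i = a' i) \<Longrightarrow> rp a = rp a'"
  unfolding rp_def by (intro sum.cong) auto

lemma rp_0: "rp (\<lambda>_. 0) = 0"
  unfolding rp_def by (simp add: h0)

lemma rp_eq0: "rp a = 0 \<Longrightarrow> i < b \<Longrightarrow> a i = 0"
  using rp_inj[of a "\<lambda>_. 0"] rp_0 by simp

lemma rp_delta: "i < b \<Longrightarrow> rp (\<lambda>k. if k = i then 1 else 0) = \<beta> i"
proof -
  assume i: "i < b"
  have "rp (\<lambda>k. if k = i then 1 else 0) = (\<Sum>k<b. if k = i then \<beta> k else 0)"
    unfolding rp_def by (intro sum.cong) (auto simp: h0 h1)
  also have "\<dots> = \<beta> i" using i by simp
  finally show ?thesis .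
qed

lemma \<beta>_inj: "i < b \<Longrightarrow> i' < b \<Longrightarrow> \<beta> i = \<beta> i' \<Longrightarrow> i = i'"
proof -
  assume i: "i < b" "i' < b" "\<beta> i = \<beta> i'"
  then have "rp (\<lambda>k. if k = i then 1 else 0) = rp (\<lambda>k. if k = i' then 1 else 0)"
    using rp_delta by simp
  from rp_inj[OF this i(1)] show "i = i'" by (metis one_neq_zero)
qed

end

locale ext2 = ext h K \<beta> b for h :: "'a::field \<Rightarrow> 'e::field" and K \<beta> b +
  fixes t :: nat and e :: "'m::finite \<Rightarrow> nat \<times> nat"
  assumes e_bij: "bij_betw e UNIV ({..<b} \<times> {..<t})" and t2: "2 \<le> t"
begin

definition \<iota> :: "nat \<times> nat \<Rightarrow> 'm" where "\<iota> = inv_into UNIV e"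

lemma e_\<iota>: "i < b \<Longrightarrow> k < t \<Longrightarrow> e (\<iota> (i, k)) = (i, k)"
  unfolding \<iota>_def using e_bij by (simp add: bij_betw_inv_into_right)

lemma \<iota>_e: "\<iota> (e m) = m"
  unfolding \<iota>_def using e_bij by (simp add: bij_betw_inv_into_left)

lemma e_range: "fst (e m) < b" "snd (e m) < t"
proof -
  have "e m \<in> range e" by simp
  then have "e m \<in> {..<b} \<times> {..<t}" using e_bij unfolding bij_betw_def by simp
  then show "fst (e m) < b" "snd (e m) < t" by (auto simp: mem_Times_iff)
qed

definition \<psi> :: "'a ^ 'm \<Rightarrow> nat \<Rightarrow> 'e" where "\<psi> x k = rp (\<lambda>i. x $ \<iota> (i, k))"

lemma \<psi>_add: "\<psi> (x + y) k = \<psi> x k + \<psi> y k"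
  unfolding \<psi>_def rp_def by (simp add: h_add sum.distrib algebra_simps)

lemma \<psi>_scale: "\<psi> (s *s x) k = h s * \<psi> x k"
  unfolding \<psi>_def rp_def by (simp add: h_mult sum_distrib_left algebra_simps)

lemma \<psi>_zero: "\<psi> 0 k = 0"
  unfolding \<psi>_def rp_def by (simp add: h0)

lemma \<psi>_sum: "\<psi> (sum f J) k = (\<Sum>j\<in>J. \<psi> (f j) k)"
  by (induction J rule: infinite_finite_induct) (simp_all add: \<psi>_zero \<psi>_add)

lemma \<psi>_K: "\<psi> x k \<in> K"
  unfolding \<psi>_def by (rule rp_K)

lemma \<psi>_inj: "(\<And>k. k < t \<Longrightarrow> \<psi> x k = \<psi> y k) \<Longrightarrow> x = y"
proof -
  assume H: "\<And>k. k < t \<Longrightarrow> \<psi> x k = \<psi> y k"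
  show "x = y"
  proof (subst vec_eq_iff, intro allI)
    fix m
    obtain i k where ik: "e m = (i, k)" by (cases "e m")
    have i: "i < b" "k < t" using e_range[of m] ik by auto
    have "x $ \<iota> (i, k) = y $ \<iota> (i, k)"
      using rp_inj[OF H[OF i(2), unfolded \<psi>_def] i(1)] by simp
    then show "x $ m = y $ m" using \<iota>_e[of m] ik by simp
  qed
qed

lemma \<psi>_surj: "(\<And>k. k < t \<Longrightarrow> w k \<in> K) \<Longrightarrow> \<exists>x. \<forall>k<t. \<psi> x k = w k"
proof -
  assume W: "\<And>k. k < t \<Longrightarrow> w k \<in> K"
  define a where "a = (\<lambda>k. SOME a. w k = rp a)"
  have a: "w k = rp (a k)" if "k < t" for k
    unfolding a_def using rp_surj[OF W[OF that]] by (rule someI_ex)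
  define x :: "'a ^ 'm" where "x = (\<chi> m. a (snd (e m)) (fst (e m)))"
  have "\<psi> x k = w k" if k: "k < t" for k
  proof -
    have "\<psi> x k = rp (a k)"
      unfolding \<psi>_def by (rule rp_cong) (simp add: x_def e_\<iota> k)
    then show ?thesis using a[OF k] by simp
  qed
  then show ?thesis by blast
qed

definition inK :: "(nat \<Rightarrow> 'e) \<Rightarrow> bool" where "inK v \<longleftrightarrow> (\<forall>k<t. v k \<in> K)"
definition nzv :: "(nat \<Rightarrow> 'e) \<Rightarrow> bool" where "nzv v \<longleftrightarrow> inK v \<and> (\<exists>k<t. v k \<noteq> 0)"
definition L :: "(nat \<Rightarrow> 'e) \<Rightarrow> ('a ^ 'm) set" where
  "L v = {x. \<exists>c\<in>K. \<forall>k<t. \<psi> x k = c * v k}"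
definition Spr :: "('a ^ 'm) set set" where "Spr = {L v | v. nzv v}"

lemma zero_L: "0 \<in> L v"
  unfolding L_def using K0 by (auto simp: \<psi>_zero intro!: bexI[of _ 0])

lemma L_subspace: "vec.subspace (L v)"
  unfolding vec.subspace_def
proof (intro conjI ballI allI)
  show "0 \<in> L v" by (rule zero_L)
next
  fix x y assume "x \<in> L v" "y \<in> L v"
  then obtain c d where "c \<in> K" "\<forall>k<t. \<psi> x k = c * v k" "d \<in> K" "\<forall>k<t. \<psi> y k = d * v k"
    unfolding L_def by blast
  then show "x + y \<in> L v" unfolding L_def
    by (auto simp: \<psi>_add algebra_simps intro!: bexI[of _ "c + d"] Kadd)
next
  fix s x assume "x \<in> L v"
  then obtain c where "c \<in> K" "\<forall>k<t. \<psi> x k = c * v k"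
    unfolding L_def by blast
  then show "s *s x \<in> L v" unfolding L_def
    by (auto simp: \<psi>_scale algebra_simps intro!: bexI[of _ "h s * c"] Kmult hK)
qed

lemma L_dim: assumes "nzv v" shows "vec.dim (L v) = b"
proof -
  obtain k0 where k0: "k0 < t" "v k0 \<noteq> 0" using assms unfolding nzv_def by blast
  have vK: "\<And>k. k < t \<Longrightarrow> v k \<in> K" using assms unfolding nzv_def inK_def by blast
  define u where "u = (\<lambda>i. SOME x. \<forall>k<t. \<psi> x k = \<beta> i * v k)"
  have u: "\<psi> (u i) k = \<beta> i * v k" if "i < b" "k < t" for i k
  proof -
    have "\<exists>x. \<forall>k<t. \<psi> x k = \<beta> i * v k"
      by (rule \<psi>_surj) (use that vK \<beta>K Kmult in auto)
    then have "\<forall>k<t. \<psi> (u i) k = \<beta> i * v k" unfolding u_def by (rule someI_ex)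
    then show ?thesis using that by blast
  qed
  define B where "B = u ` {..<b}"
  have injU: "inj_on u {..<b}"
  proof (rule inj_onI)
    fix i i' assume "i \<in> {..<b}" "i' \<in> {..<b}" "u i = u i'"
    then have "\<beta> i * v k0 = \<beta> i' * v k0" using u[of i k0] u[of i' k0] k0 by auto
    then have "\<beta> i = \<beta> i'" using k0 by simp
    then show "i = i'" using \<beta>_inj \<open>i \<in> {..<b}\<close> \<open>i' \<in> {..<b}\<close> by auto
  qed
  have BL: "B \<subseteq> L v"
    unfolding B_def L_def using u \<beta>K by auto
  have LB: "L v \<subseteq> vec.span B"
  proof
    fix x assume "x \<in> L v"
    then obtain c where c: "c \<in> K" "\<forall>k<t. \<psi> x k = c * v k" unfolding L_def by blast
    obtain a where a: "c = rp a" using rp_surj[OF c(1)] by blast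
    define y where "y = (\<Sum>i<b. a i *s u i)"
    have "\<psi> y k = \<psi> x k" if k: "k < t" for k
    proof -
      have "\<psi> y k = (\<Sum>i<b. h (a i) * (\<beta> i * v k))"
        unfolding y_def \<psi>_sum by (intro sum.cong refl) (simp add: \<psi>_scale u k)
      also have "\<dots> = rp a * v k" unfolding rp_def sum_distrib_right by (simp add: algebra_simps)
      finally show ?thesis using c a k by simp
    qed
    then have "x = y" using \<psi>_inj by metis
    moreover have "y \<in> vec.span B" unfolding y_def B_def
      by (intro vec.span_sum vec.span_scale vec.span_base) auto
    ultimately show "x \<in> vec.span B" by simp
  qed
  have indB: "vec.independent B"
  proof (rule vec.independent_if_scalars_zero)
    show "finite B" unfolding B_def by simp
    fix f x assume sum0: "(\<Sum>x\<in>B. f x *s x) = 0" and x: "x \<in> B"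
    have "(\<Sum>i<b. f (u i) *s u i) = 0"
      using sum0 unfolding B_def by (simp add: sum.reindex[OF injU])
    then have "\<psi> (\<Sum>i<b. f (u i) *s u i) k0 = 0" by (simp add: \<psi>_zero)
    moreover have "\<psi> (\<Sum>i<b. f (u i) *s u i) k0 = rp (\<lambda>i. f (u i)) * v k0"
      unfolding \<psi>_sum rp_def sum_distrib_right
      by (intro sum.cong refl) (simp add: \<psi>_scale u k0)
    ultimately have "rp (\<lambda>i. f (u i)) = 0" using k0 by simp
    then show "f x = 0" using x rp_eq0 unfolding B_def by auto
  qed
  have "card B = b" unfolding B_def using card_image[OF injU] by simp
  moreover have "card B = vec.dim (L v)" by (rule vec.basis_card_eq_dim[OF BL LB indB])
  ultimately show ?thesis by simp
qed

lemma L_zero_coeff: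
  assumes "x \<in> L v" "x \<noteq> 0"
  obtains c where "c \<in> K" "c \<noteq> 0" "\<forall>k<t. \<psi> x k = c * v k"
proof -
  obtain c where c: "c \<in> K" "\<forall>k<t. \<psi> x k = c * v k" using assms unfolding L_def by blast
  have "c \<noteq> 0"
  proof
    assume "c = 0"
    then have "\<forall>k<t. \<psi> x k = \<psi> 0 k" using c by (simp add: \<psi>_zero)
    then have "x = 0" using \<psi>_inj by metis
    then show False using assms by simp
  qed
  then show ?thesis using c that by blast
qed

lemma L_overlap:
  assumes "x \<in> L v" "x \<in> L w" "x \<noteq> 0"
  shows "L v \<subseteq> L w"
proof
  obtain c where c: "c \<in> K" "c \<noteq> 0" "\<forall>k<t. \<psi> x k = c * v k" using L_zero_coeff[OF assms(1,3)] by blast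
  obtain c' where c': "c' \<in> K" "c' \<noteq> 0" "\<forall>k<t. \<psi> x k = c' * w k" using L_zero_coeff[OF assms(2,3)] by blast
  fix y assume "y \<in> L v"
  then obtain d where d: "d \<in> K" "\<forall>k<t. \<psi> y k = d * v k" unfolding L_def by blast
  have "\<psi> y k = (d * inverse c * c') * w k" if k: "k < t" for k
  proof -
    have "v k = inverse c * c' * w k" using c(2,3) c'(3) k by (metis mult.assoc nonzero_eq_divide_eq divide_inverse_commute mult.commute)
    then show ?thesis using d k by (simp add: mult.assoc)
  qed
  moreover have "d * inverse c * c' \<in> K" using c c' d by (intro Kmult Kinv)
  ultimately show "y \<in> L w" unfolding L_def by blast
qed

definition \<epsilon> :: "nat \<Rightarrow> nat \<Rightarrow> 'e" where "\<epsilon> k = (\<lambda>k'. if k' = k then 1 else 0)"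

lemma nzv_\<epsilon>: "k < t \<Longrightarrow> nzv (\<epsilon> k)"
  unfolding nzv_def inK_def \<epsilon>_def using K0 K1 by auto

lemma is_spread_Spr: "is_spread b Spr"
  unfolding is_spread_def
proof (intro conjI ballI impI)
  fix W assume "W \<in> Spr"
  then obtain v where "W = L v" "nzv v" unfolding Spr_def by blast
  then show "vec.subspace W" "vec.dim W = b" using L_subspace L_dim by auto
next
  fix W W' assume W: "W \<in> Spr" "W' \<in> Spr" "W \<noteq> W'"
  then obtain v v' where v: "W = L v" "W' = L v'" unfolding Spr_def by blast
  show "W \<inter> W' = {0}"
  proof (rule ccontr)
    assume "W \<inter> W' \<noteq> {0}"
    moreover have "0 \<in> W \<inter> W'" using zero_L v by auto
    ultimately obtain x where "x \<in> W" "x \<in> W'" "x \<noteq> 0" by blast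
    then have "W \<subseteq> W'" "W' \<subseteq> W" using L_overlap v by blast+
    then show False using W(3) by blast
  qed
next
  show "\<Union> Spr = UNIV"
  proof (intro equalityI subsetI)
    fix x :: "'a ^ 'm"
    show "x \<in> \<Union> Spr"
    proof (cases "\<exists>k<t. \<psi> x k \<noteq> 0")
      case True
      then have "nzv (\<psi> x)" unfolding nzv_def inK_def using \<psi>_K by blast
      moreover have "x \<in> L (\<psi> x)" unfolding L_def using K1 by force
      ultimately show ?thesis unfolding Spr_def by blast
    next
      case False
      then have "x = 0" using \<psi>_inj[of x 0] by (simp add: \<psi>_zero)
      moreover have "nzv (\<epsilon> 0)" using nzv_\<epsilon> t2 by simp
      ultimately show ?thesis unfolding Spr_def using zero_L by blast
    qed
  qed simp
qed

end



context ext2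
begin

lemma decomp:
  assumes W: "\<And>k. k < t \<Longrightarrow> inK (w k)"
    and C: "\<And>y. inK y \<Longrightarrow> \<exists>c. inK c \<and> (\<forall>k'<t. y k' = (\<Sum>k<t. c k * w k k'))"
  shows "\<exists>f. x = (\<Sum>k<t. f k) \<and> (\<forall>k<t. f k \<in> L (w k))"
proof -
  have "inK (\<psi> x)" unfolding inK_def using \<psi>_K by blast
  then obtain c where c: "inK c" "\<forall>k'<t. \<psi> x k' = (\<Sum>k<t. c k * w k k')" using C by blast
  define f where "f = (\<lambda>k. SOME z. \<forall>k'<t. \<psi> z k' = c k * w k k')"
  have f: "\<psi> (f k) k' = c k * w k k'" if "k < t" "k' < t" for k k'
  proof -
    have "\<exists>z. \<forall>k'<t. \<psi> z k' = c k * w k k'"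
      by (rule \<psi>_surj) (use that c(1) W Kmult in \<open>auto simp: inK_def\<close>)
    then have "\<forall>k'<t. \<psi> (f k) k' = c k * w k k'" unfolding f_def by (rule someI_ex)
    then show ?thesis using that by blast
  qed
  have "\<forall>k<t. f k \<in> L (w k)"
    unfolding L_def using f c(1) by (auto simp: inK_def)
  moreover have "x = (\<Sum>k<t. f k)"
  proof (rule \<psi>_inj)
    fix k' assume "k' < t"
    then show "\<psi> x k' = \<psi> (\<Sum>k<t. f k) k'"
      unfolding \<psi>_sum using c(2) f by simp
  qed
  ultimately show ?thesis by blast
qed

lemma L_eq_coeff:
  assumes "nzv v" "L v = L w"
  shows "\<exists>c. \<forall>k<t. v k = c * w k"
proof -
  have "\<exists>x. \<forall>k<t. \<psi> x k = v k" using assms(1) \<psi>_surj unfolding nzv_def inK_def by blast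
  then obtain x where x: "\<forall>k<t. \<psi> x k = v k" by blast
  then have "x \<in> L v" unfolding L_def using K1 by force
  then have "x \<in> L w" using assms by simp
  then show ?thesis unfolding L_def using x by auto
qed

lemma sum_\<epsilon>: "k' < t \<Longrightarrow> (\<Sum>k<t. c k * \<epsilon> k k') = c k'"
proof -
  assume k': "k' < t"
  have "(\<Sum>k<t. c k * \<epsilon> k k') = (\<Sum>k<t. if k = k' then c k else 0)"
    by (intro sum.cong) (auto simp: \<epsilon>_def)
  also have "\<dots> = c k'" using k' by simp
  finally show ?thesis .
qed

lemma family:
  assumes "nzv v"
  shows "\<exists>w. (\<forall>k<t. nzv (w k) \<and> L (w k) \<noteq> L v) \<and>
             (\<forall>y. inK y \<longrightarrow> (\<exists>c. inK c \<and> (\<forall>k'<t. y k' = (\<Sum>k<t. c k * w k k'))))"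
proof (cases "\<exists>k0<t. L v = L (\<epsilon> k0)")
  case False
  have "\<forall>k<t. nzv (\<epsilon> k) \<and> L (\<epsilon> k) \<noteq> L v" using False nzv_\<epsilon> by metis
  moreover have "inK y \<Longrightarrow> \<exists>c. inK c \<and> (\<forall>k'<t. y k' = (\<Sum>k<t. c k * \<epsilon> k k'))" for y
    using sum_\<epsilon> by auto
  ultimately show ?thesis by blast
next
  case True
  then obtain k0 where k0: "k0 < t" "L v = L (\<epsilon> k0)" by blast
  define k1 :: nat where "k1 = (if k0 = 0 then 1 else 0)"
  have k1: "k1 < t" "k1 \<noteq> k0" using t2 k0 by (auto simp: k1_def)
  define w where "w = (\<lambda>k. if k = k0 then (\<lambda>k'. \<epsilon> k0 k' + \<epsilon> k1 k') else \<epsilon> k)"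
  have wK: "inK (w k)" for k unfolding w_def inK_def \<epsilon>_def using K0 K1 Kadd by auto
  have nz: "nzv (w k)" if "k < t" for k
  proof (cases "k = k0")
    case True
    then have "w k k0 = 1" using k1 by (simp add: w_def \<epsilon>_def)
    then show ?thesis using wK k0 unfolding nzv_def by force
  next
    case False
    then show ?thesis using nzv_\<epsilon>[OF that] by (simp add: w_def)
  qed
  have ne: "L (w k) \<noteq> L v" if kt: "k < t" for k
  proof
    assume "L (w k) = L v"
    then have "L (w k) = L (\<epsilon> k0)" using k0 by simp
    then obtain c where c: "\<forall>k'<t. w k k' = c * \<epsilon> k0 k'" using L_eq_coeff nz[OF kt] by blast
    show False
    proof (cases "k = k0")
      case True
      then have "w k k1 = 1" using k1 by (simp add: w_def \<epsilon>_def)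
      moreover have "\<epsilon> k0 k1 = 0" using k1 by (simp add: \<epsilon>_def)
      ultimately show False using c k1 by force
    next
      case False
      then have "w k k = 1" by (simp add: w_def \<epsilon>_def)
      moreover have "\<epsilon> k0 k = 0" using False by (simp add: \<epsilon>_def)
      ultimately show False using c kt by force
    qed
  qed
  have comb: "\<exists>c. inK c \<and> (\<forall>k'<t. y k' = (\<Sum>k<t. c k * w k k'))" if y: "inK y" for y
  proof -
    define c where "c = (\<lambda>k. if k = k1 then y k1 - y k0 else y k)"
    have cK: "inK c" using y k0 k1 Kdiff unfolding inK_def c_def by auto
    have "y k' = (\<Sum>k<t. c k * w k k')" if k': "k' < t" for k'
    proof -
      have "(\<Sum>k<t. c k * w k k') = (\<Sum>k<t. c k * \<epsilon> k k' + (if k = k0 then c k * \<epsilon> k1 k' else 0))"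
        by (intro sum.cong) (auto simp: w_def algebra_simps)
      also have "\<dots> = c k' + c k0 * \<epsilon> k1 k'"
        using k0 k' by (simp add: sum.distrib sum_\<epsilon>)
      also have "\<dots> = y k'" using k1 by (auto simp: c_def \<epsilon>_def)
      finally show ?thesis by simp
    qed
    then show ?thesis using cK by blast
  qed
  show ?thesis using nz ne comb by blast
qed

lemma partB:
  assumes cd: "array_code_of n b Spr V g"
  shows "node_locality n b g \<le> t"
proof -
  interpret codeS b Spr n V g using is_spread_Spr cd by unfold_locales
  have "\<forall>j<n. \<exists>R. R \<subseteq> {..<n} - {j} \<and> card R \<le> t \<and> column_recoverable b g R j"
  proof (intro allI impI)
    fix j assume j: "j < n"
    obtain v where v: "V j = L v" "nzv v" using VS[OF j] unfolding Spr_def by blast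
    obtain w where w: "\<forall>k<t. nzv (w k) \<and> L (w k) \<noteq> L v"
      and C: "\<forall>y. inK y \<longrightarrow> (\<exists>c. inK c \<and> (\<forall>k'<t. y k' = (\<Sum>k<t. c k * w k k')))"
      using family[OF v(2)] by blast
    have "\<forall>k\<in>{..<t}. \<exists>r. r < n \<and> V r = L (w k)"
      using Vsurj w unfolding Spr_def by blast
    then obtain r where r: "\<forall>k\<in>{..<t}. r k < n \<and> V (r k) = L (w k)" by metis
    let ?R = "r ` {..<t}"
    have Rsub: "?R \<subseteq> {..<n} - {j}" using r w v by fastforce
    have cR: "card ?R \<le> t" using card_image_le[of "{..<t}" r] by simp
    have "column_recoverable b g ?R j"
      unfolding column_recoverable_def recov_iff
    proof (intro allI impI)
      fix i assume i: "i < b"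
      obtain f where f: "g j i = (\<Sum>k<t. f k)" "\<forall>k<t. f k \<in> L (w k)"
        using decomp[of w "g j i"] w C unfolding nzv_def by blast
      have "f k \<in> sumspan b g ?R" if "k \<in> {..<t}" for k
      proof -
        have "f k \<in> V (r k)" using f r that by auto
        moreover have "V (r k) \<subseteq> sumspan b g ?R" using Vss Rsub that by blast
        ultimately show ?thesis by blast
      qed
      then show "g j i \<in> sumspan b g ?R" unfolding f(1)
        by (intro vec.subspace_sum[OF sumspan_subspace]) 
    qed
    then show "\<exists>R. R \<subseteq> {..<n} - {j} \<and> card R \<le> t \<and> column_recoverable b g R j"
      using Rsub cR by blast
  qed
  then show ?thesis unfolding node_locality_def by (rule Least_le)
qed

end


theorem mainTheorem8:
  fixes b :: nat
  assumes "b dvd CARD('m::finite)" and "b < CARD('m)"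
  shows "(\<forall>(S :: ('a::{finite,field} ^ 'm) set set) n V g.
            is_spread b S \<and> array_code_of n b S V g \<longrightarrow>
              symbol_locality n b g = 2 \<and>
              2 \<le> node_locality n b g \<and> node_locality n b g \<le> b + 1)
       \<and> (\<exists>S :: ('a ^ 'm) set set. is_spread b S \<and>
            (\<forall>n V g. array_code_of n b S V g \<longrightarrow>
               node_locality n b g \<le> CARD('m) div b))"
proof -
  have M0: "CARD('m) > 0" by simp
  have b0: "0 < b" using assms(1) M0 by (cases b) auto
  have P1: "\<forall>(S :: ('a::{finite,field} ^ 'm) set set) n V g.
            is_spread b S \<and> array_code_of n b S V g \<longrightarrow>
              symbol_locality n b g = 2 \<and>
              2 \<le> node_locality n b g \<and> node_locality n b g \<le> b + 1"
    using partA[OF b0 assms(2)] by blast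
  define t where "t = CARD('m) div b"
  have Mbt: "CARD('m) = b * t" using assms(1) unfolding t_def by simp
  have t2: "2 \<le> t"
  proof (rule ccontr)
    assume "\<not> 2 \<le> t"
    then have "t \<le> 1" by simp
    then have "b * t \<le> b" by (simp add: mult_le_cancel1)
    then show False using Mbt assms(2) by simp
  qed
  obtain K :: "'a alg_closure set" and \<beta> where K: "subfieldset K" "FF \<subseteq> K" "\<forall>i<b. \<beta> i \<in> K"
      "bij_betw (rep \<beta> b) (Pd b FF) K"
    using K_exists[OF b0] by blast
  have "card (UNIV :: 'm set) = card ({..<b} \<times> {..<t})" using Mbt by (simp add: card_cartesian_product)
  then obtain e :: "'m \<Rightarrow> nat \<times> nat" where e: "bij_betw e UNIV ({..<b} \<times> {..<t})"
    using finite_same_card_bij[of "UNIV :: 'm set" "{..<b} \<times> {..<t}"] by auto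
  interpret E: ext2 to_ac K \<beta> b t e
  proof unfold_locales
    show "\<And>x y. to_ac (x + y) = to_ac x + to_ac y" by simp
    show "\<And>x y. to_ac (x * y) = to_ac x * to_ac y" by simp
    show "to_ac 0 = 0" by simp
    show "inj to_ac" by (rule inj_to_ac)
    show "subfieldset K" by (rule K(1))
    show "\<And>x. to_ac x \<in> K" using K(2) unfolding FF_def by auto
    show "\<And>i. i < b \<Longrightarrow> \<beta> i \<in> K" using K(3) by auto
    show "bij_betw (rep \<beta> b) (Pd b (range to_ac)) K" using K(4) unfolding FF_def .
    show "bij_betw e UNIV ({..<b} \<times> {..<t})" by (rule e)
    show "2 \<le> t" by (rule t2)
  qed
  have P2: "is_spread b E.Spr \<and> (\<forall>n V g. array_code_of n b E.Spr V g \<longrightarrow> node_locality n b g \<le> CARD('m) div b)"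
    using E.is_spread_Spr E.partB unfolding t_def by blast
  show ?thesis using P1 P2 by blast
qed

end
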